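(* Let $C$ be an $[n,k]$ code over $\mathbb{F}_q$ with $d(C^\perp)=3$. Then $\gamma(C)=k$ $(=k-d(C^\perp)+3)$ if and only if $C$ is monomially equivalent to a dual Hamming code.
   Context: An $[n,k]$ code over $\mathbb{F}_q$ is a $k$-dimensional subspace $C\subseteq\mathbb{F}_q^n$; write $E=\{1,\dots,n\}$. For $\bm{x}\in\mathbb{F}_q^n$, $\mathrm{supp}(\bm{x})=\{i: x_i\neq 0\}$ and the weight is $|\mathrm{supp}(\bm{x})|$; for $B\subseteq\mathbb{F}_q^n$, $\mathrm{Supp}(B)=\bigcup_{\bm{x}\in B}\mathrm{supp}(\bm{x})$. $C^\perp$ is the dual code with respect to the standard inner product and $d(C^\perp)$ is the minimum weight of a nonzero codeword of $C^\perp$. The covering dimension is $\gamma(C)=\infty$ if $\mathrm{Supp}(C)\neq E$, and otherwise $\gamma(C)$ is the least positive integer $r$ such that $C$ has an $r$-dimensional subspace $D$ with $\mathrm{Supp}(D)=E$. A dual Hamming code is an $[(q^k-1)/(q-1),k]$ code over $\mathbb{F}_q$ with a generator matrix whose columns consist of exactly one nonzero vector from each one-dimensional subspace of $\mathbb{F}_q^k$. Two codes are monomially equivalent if one is obtained from the other by permuting coordinates and multiplying coordinates by nonzero scalars. *)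

theory Defs
  imports "HOL-Analysis.Analysis" "HOL-Library.Extended_Nat"
begin

text \<open>Vectors of F_q^n are elements of type 'a ^ 'n, where 'a is a finite field
  and the coordinate set E is the finite type 'n (so n = CARD('n)).
  A linear code is a subspace w.r.t. the scalar multiplication (*s).\<close>

definition supp :: "'a::zero ^ 'n \<Rightarrow> 'n set" where
  "supp x = {i. x $ i \<noteq> 0}"

definition Supp :: "('a::zero ^ 'n) set \<Rightarrow> 'n set" where
  "Supp B = (\<Union>x\<in>B. supp x)"

definition wt :: "'a::zero ^ 'n::finite \<Rightarrow> nat" where
  "wt x = card (supp x)"

definition dual_code :: "('a::field ^ 'n::finite) set \<Rightarrow> ('a ^ 'n) set" where
  "dual_code C = {y. \<forall>x\<in>C. (\<Sum>j\<in>UNIV. x $ j * y $ j) = 0}"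

text \<open>Minimum weight of a nonzero codeword (convention: 0 for the zero code).\<close>
definition min_wt :: "('a::zero ^ 'n::finite) set \<Rightarrow> nat" where
  "min_wt C = (if \<exists>x\<in>C. x \<noteq> 0 then Min {wt x | x. x \<in> C \<and> x \<noteq> 0} else 0)"

definition covering_dim :: "('a::field ^ 'n::finite) set \<Rightarrow> enat" where
  "covering_dim C =
     (if Supp C \<noteq> UNIV then \<infinity>
      else enat (LEAST r. r > 0 \<and>
              (\<exists>D. vec.subspace D \<and> D \<subseteq> C \<and> vec.dim D = r \<and> Supp D = UNIV)))"

text \<open>D is obtained from C by permuting coordinates and multiplying
  coordinates by nonzero scalars.\<close>
definition monomially_equivalent :: "('a::field ^ 'n::finite) set \<Rightarrow> ('a ^ 'n) set \<Rightarrow> bool" where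
  "monomially_equivalent C D \<longleftrightarrow>
     (\<exists>\<sigma> :: 'n \<Rightarrow> 'n. \<exists>s :: 'n \<Rightarrow> 'a. bij \<sigma> \<and> (\<forall>j. s j \<noteq> 0) \<and>
        D = (\<lambda>x. \<chi> j. s j * x $ \<sigma> j) ` C)"

text \<open>Dual Hamming code of dimension k over the field 'a (q = CARD('a)):
  a [(q^k-1)/(q-1), k] code with generator matrix G (rows G 0, ..., G (k-1))
  whose columns (vectors in F_q^k, represented as functions on {0..<k})
  consist of exactly one nonzero vector from each one-dimensional subspace
  of F_q^k.\<close>
definition dual_hamming_code :: "nat \<Rightarrow> ('a::{field,finite} ^ 'n::finite) set \<Rightarrow> bool" where
  "dual_hamming_code k D \<longleftrightarrow>
     CARD('n) = (CARD('a) ^ k - 1) div (CARD('a) - 1) \<and>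
     vec.dim D = k \<and>
     (\<exists>G :: nat \<Rightarrow> 'a ^ 'n.
        D = vec.span (G ` {0..<k}) \<and>
        (\<forall>j. \<exists>i<k. G i $ j \<noteq> 0) \<and>
        (\<forall>v :: nat \<Rightarrow> 'a. (\<exists>i<k. v i \<noteq> 0) \<longrightarrow>
            (\<exists>!j. \<exists>c. c \<noteq> 0 \<and> (\<forall>i<k. G i $ j = c * v i))))"

end

theory Submission
  imports Defs
begin

interpretation vsp: vector_space_pair "(*s) :: 'a::field \<Rightarrow> 'a^'n \<Rightarrow> 'a^'n" "(*) :: 'a \<Rightarrow> 'a \<Rightarrow> 'a"
  by unfold_locales

lemma lin_comp: "Vector_Spaces.linear ((*s) :: 'a::field \<Rightarrow> 'a^'n \<Rightarrow> 'a^'n) (*) (\<lambda>x. x $ j)"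
  unfolding Vector_Spaces.linear_iff
  by (auto simp: vec.vector_space_axioms vector_space_over_itself.vector_space_axioms)

lemma lin_scale: "Vector_Spaces.linear ((*s) :: 'a::field \<Rightarrow> 'a^'n \<Rightarrow> 'a^'n) (*) f \<Longrightarrow>
   Vector_Spaces.linear ((*s) :: 'a::field \<Rightarrow> 'a^'n \<Rightarrow> 'a^'n) (*) (\<lambda>x. c * f x)"
  unfolding Vector_Spaces.linear_iff by (auto simp: algebra_simps)

lemma min_wt_le:
  fixes C :: "('a::field ^ 'n::finite) set"
  assumes "y \<in> dual_code C" "y \<noteq> 0"
  shows "min_wt (dual_code C) \<le> wt y"
proof -
  have "{wt x | x. x \<in> dual_code C \<and> x \<noteq> 0} \<subseteq> {..CARD('n)}"
    by (auto simp: wt_def intro!: card_mono)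
  then have "finite {wt x | x. x \<in> dual_code C \<and> x \<noteq> 0}" using finite_subset by blast
  then show ?thesis unfolding min_wt_def using assms by (auto intro!: Min_le)
qed

lemma zero_col:
  fixes C :: "('a::field ^ 'n::finite) set"
  assumes "min_wt (dual_code C) = 3"
  shows "\<exists>x\<in>C. x $ j \<noteq> 0"
proof (rule ccontr)
  assume h: "\<not> ?thesis"
  let ?y = "axis j (1::'a)"
  have "?y \<in> dual_code C" using h
    by (auto simp: dual_code_def axis_def if_distrib cong: if_cong)
  moreover have "?y \<noteq> 0" by (simp add: axis_eq_0_iff)
  moreover have "wt ?y = 1" by (simp add: wt_def supp_def axis_def)
  ultimately show False using min_wt_le[of ?y C] assms by simp
qed

lemma sum_axis: "(\<Sum>l\<in>UNIV. (x::'a::comm_ring_1^'n::finite) $ l * axis j a $ l) = x $ j * a"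
  by (simp add: axis_def if_distrib cong: if_cong)

lemma prop_col:
  fixes C :: "('a::field ^ 'n::finite) set"
  assumes "min_wt (dual_code C) = 3" "j \<noteq> j'" "\<forall>x\<in>C. x $ j' = c * x $ j"
  shows False
proof -
  let ?y = "c *s axis j (1::'a) - axis j' 1"
  have "(\<Sum>l\<in>UNIV. x $ l * ?y $ l) = 0" if "x \<in> C" for x
  proof -
    have "(\<Sum>l\<in>UNIV. x $ l * ?y $ l) = (\<Sum>l\<in>UNIV. c * (x $ l * axis j 1 $ l) - x $ l * axis j' 1 $ l)"
      by (simp add: algebra_simps)
    also have "\<dots> = c * x $ j - x $ j'" by (simp add: sum_subtractf sum_distrib_left[symmetric] sum_axis)
    finally show ?thesis using assms(3) that by simp
  qed
  then have "?y \<in> dual_code C" by (simp add: dual_code_def)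
  moreover have "?y \<noteq> 0" using assms(2) by (auto simp: vec_eq_iff axis_def)
  moreover have "wt ?y \<le> 2"
  proof -
    have "supp ?y \<subseteq> {j, j'}" by (auto simp: supp_def axis_def)
    then have "card (supp ?y) \<le> card {j,j'}" by (intro card_mono) auto
    also have "\<dots> \<le> 2" by (simp add: card_insert_if)
    finally show ?thesis by (simp add: wt_def)
  qed
  ultimately show False using min_wt_le[of ?y C] assms by simp
qed


lemma lin_construct:
  "vec.independent B \<Longrightarrow> Vector_Spaces.linear ((*s) :: 'a::field \<Rightarrow> 'a^'n::finite \<Rightarrow> 'a^'n) (*) (vsp.construct B f)"
  by (rule vsp.linear_construct)

lemma no_small:
  fixes D :: "('a::field ^ 'n::finite) set" and G :: "nat \<Rightarrow> 'a^'n"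
  assumes D: "D = vec.span (G ` {0..<k})" "vec.dim D = k"
   and pts: "\<forall>v::nat\<Rightarrow>'a. (\<exists>i<k. v i \<noteq> 0) \<longrightarrow> (\<exists>j c. c \<noteq> 0 \<and> (\<forall>i<k. G i $ j = c * v i))"
   and D': "vec.subspace D'" "D' \<subseteq> D" "vec.dim D' < k"
  shows "Supp D' \<noteq> UNIV"
proof -
  obtain B' where B': "B' \<subseteq> D'" "vec.independent B'" "D' \<subseteq> vec.span B'" "card B' = vec.dim D'"
    by (rule vec.basis_exists)
  obtain B where B: "B' \<subseteq> B" "B \<subseteq> D" "vec.independent B" "D \<subseteq> vec.span B"
    using vec.maximal_independent_subset_extend[of B' D] B' D' by blast
  have cB: "card B = k" using vec.basis_card_eq_dim[OF B(2,4,3)] D(2) by simp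
  have fB: "finite B" using B(3) vec.finiteI_independent by blast
  obtain b where b: "b \<in> B" "b \<notin> B'"
    using cB B'(4) D'(3) B(1) by (metis card_mono fB leD subsetI subset_antisym)
  define l where "l = vsp.construct B (\<lambda>z. if z = b then 1 else (0::'a))"
  have ll: "Vector_Spaces.linear ((*s) :: 'a \<Rightarrow> 'a^'n \<Rightarrow> 'a^'n) (*) l"
    unfolding l_def by (rule lin_construct[OF B(3)])
  have lB: "z \<in> B \<Longrightarrow> l z = (if z = b then 1 else 0)" for z
    unfolding l_def by (rule vsp.construct_basis[OF B(3)])
  have "\<exists>i<k. l (G i) \<noteq> 0"
  proof (rule ccontr)
    assume "\<not> ?thesis"
    then have "l b = 0 * l b"
      using b(1) B(2) D(1)
      by (intro vsp.linear_eq_on[OF ll lin_scale[OF ll], of b "G ` {0..<k}"]) auto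
    then show False using lB[OF b(1)] by simp
  qed
  then obtain j c where jc: "c \<noteq> 0" "\<forall>i<k. G i $ j = c * l (G i)"
    using pts[rule_format, of "\<lambda>i. l (G i)"] by blast
  have "x $ j = 0" if "x \<in> D'" for x
  proof -
    have "x $ j = c * l x"
      using that D'(2) D(1) jc(2)
      by (intro vsp.linear_eq_on[OF lin_comp lin_scale[OF ll], of x "G ` {0..<k}"]) auto
    moreover have "l x = 0 * l x"
      using that B'(3) B'(1) b lB B(1)
      by (intro vsp.linear_eq_on[OF ll lin_scale[OF ll], of x B']) auto
    ultimately show ?thesis by simp
  qed
  then have "j \<notin> Supp D'" by (auto simp: Supp_def supp_def)
  then show ?thesis by auto
qed

lemma cov_dim_all_points:
  fixes D :: "('a::field ^ 'n::finite) set" and G :: "nat \<Rightarrow> 'a^'n"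
  assumes D: "D = vec.span (G ` {0..<k})" "vec.dim D = k" "Supp D = UNIV"
   and pts: "\<forall>v::nat\<Rightarrow>'a. (\<exists>i<k. v i \<noteq> 0) \<longrightarrow> (\<exists>j c. c \<noteq> 0 \<and> (\<forall>i<k. G i $ j = c * v i))"
  shows "covering_dim D = enat k"
proof -
  have k0: "k > 0"
  proof (rule ccontr)
    assume "\<not> k > 0"
    then have "D \<subseteq> {0}" using D(2) by simp
    then have "Supp D = {}" by (auto simp: Supp_def supp_def)
    then show False using D(3) by simp
  qed
  have "(LEAST r. r > 0 \<and> (\<exists>D'. vec.subspace D' \<and> D' \<subseteq> D \<and> vec.dim D' = r \<and> Supp D' = UNIV)) = k"
  proof (rule Least_equality)
    show "k > 0 \<and> (\<exists>D'. vec.subspace D' \<and> D' \<subseteq> D \<and> vec.dim D' = k \<and> Supp D' = UNIV)"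
      using k0 D by (intro conjI exI[of _ D]) auto
  next
    fix y assume "y > 0 \<and> (\<exists>D'. vec.subspace D' \<and> D' \<subseteq> D \<and> vec.dim D' = y \<and> Supp D' = UNIV)"
    then obtain D' where "vec.subspace D'" "D' \<subseteq> D" "vec.dim D' = y" "Supp D' = UNIV" by blast
    then show "k \<le> y" using no_small[OF D(1,2) pts, of D'] by force
  qed
  then show ?thesis using D(3) by (simp add: covering_dim_def)
qed


lemma missing_point:
  fixes C :: "('a::field ^ 'n::finite) set" and G :: "nat \<Rightarrow> 'a^'n"
  assumes C: "C = vec.span (G ` {0..<k})" "vec.independent (G ` {0..<k})" "inj_on G {0..<k}"
   and cols: "\<forall>j. \<exists>x\<in>C. x $ j \<noteq> 0"
   and v: "\<exists>i<k. v i \<noteq> 0" and nov: "\<not>(\<exists>j c. c \<noteq> 0 \<and> (\<forall>i<k. G i $ j = c * v i))"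
  shows "covering_dim C \<noteq> enat k"
proof -
  define l where "l = vsp.construct (G ` {0..<k}) (\<lambda>z. v (the_inv_into {0..<k} G z))"
  have ll: "Vector_Spaces.linear ((*s) :: 'a \<Rightarrow> 'a^'n \<Rightarrow> 'a^'n) (*) l"
    unfolding l_def by (rule lin_construct[OF C(2)])
  have lG: "i < k \<Longrightarrow> l (G i) = v i" for i
    unfolding l_def using C(3) by (subst vsp.construct_basis[OF C(2)]) (auto simp: the_inv_into_f_f)
  interpret L: Vector_Spaces.linear "(*s) :: 'a \<Rightarrow> 'a^'n \<Rightarrow> 'a^'n" "(*)" l by (rule ll)
  obtain i0 where i0: "i0 < k" "v i0 \<noteq> 0" using v by blast
  define x0 where "x0 = (1 / v i0) *s G i0"
  have x0C: "x0 \<in> C" unfolding x0_def C(1) using i0 by (intro vec.span_scale vec.span_base) auto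
  have lx0: "l x0 = 1" unfolding x0_def using i0 by (simp add: L.scale lG)
  define D where "D = C \<inter> {x. l x = 0}"
  have sC: "vec.subspace C" unfolding C(1) by simp
  have sD: "vec.subspace D" unfolding D_def vec.subspace_def
    using sC[unfolded vec.subspace_def] by (auto simp: L.add L.scale L.zero)
  have SD: "Supp D = UNIV"
  proof (rule ccontr)
    assume "Supp D \<noteq> UNIV"
    then obtain j where j: "\<forall>x\<in>D. x $ j = 0" by (auto simp: Supp_def supp_def)
    have Gi: "G i $ j = x0 $ j * v i" if "i < k" for i
    proof -
      have "G i \<in> C" using that C(1) by (auto intro: vec.span_base)
      then have "G i - v i *s x0 \<in> C" using x0C sC by (simp add: vec.subspace_diff vec.subspace_scale)
      then have "G i - v i *s x0 \<in> D" unfolding D_def using that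
        by (auto simp: L.diff L.scale lG lx0)
      then have "(G i - v i *s x0) $ j = 0" using j by blast
      then show ?thesis by (simp add: algebra_simps)
    qed
    show False
    proof (cases "x0 $ j = 0")
      case True
      have "x $ j = 0 * l x" if "x \<in> C" for x
        using that C(1) Gi True
        by (intro vsp.linear_eq_on[OF lin_comp lin_scale[OF ll], of x "G ` {0..<k}"]) auto
      then show False using cols by auto
    next
      case False
      then show False using nov Gi by blast
    qed
  qed
  have DC: "D \<subset> C" using x0C lx0 unfolding D_def by (metis (mono_tags) Int_iff inf_le1 mem_Collect_eq one_neq_zero psubsetI)
  have dimC: "vec.dim C = k"
    unfolding C(1) vec.dim_span using vec.dim_eq_card_independent[OF C(2)] card_image[OF C(3)] by simp
  have "vec.dim D < k"
  proof -
    have e: "vec.span D = D" "vec.span C = C" using sD sC by auto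
    have "vec.span D \<subset> vec.span C" by (simp only: e DC)
    then have "vec.dim D < vec.dim C" by (rule vec.dim_psubset)
    then show ?thesis using dimC by simp
  qed
  moreover have "vec.dim D > 0"
  proof -
    obtain x where "x \<in> D" "x $ undefined \<noteq> 0" using SD by (auto simp: Supp_def supp_def)
    then have "\<not> D \<subseteq> {0}" by auto
    then show ?thesis using vec.dim_eq_0 by (metis gr0I)
  qed
  moreover have "Supp C = UNIV" using cols by (auto simp: Supp_def supp_def)
  ultimately have "(LEAST r. r > 0 \<and> (\<exists>D'. vec.subspace D' \<and> D' \<subseteq> C \<and> vec.dim D' = r \<and> Supp D' = UNIV)) < k"
    using sD DC SD
    by (intro le_less_trans[OF Least_le]) auto
  then show ?thesis using \<open>Supp C = UNIV\<close> by (simp add: covering_dim_def)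
qed


definition mono_map :: "('n \<Rightarrow> 'n) \<Rightarrow> ('n \<Rightarrow> 'a) \<Rightarrow> 'a::field^'n::finite \<Rightarrow> 'a^'n" where
  "mono_map \<sigma> s x = (\<chi> j. s j * x $ \<sigma> j)"

lemma mono_map_lin: "Vector_Spaces.linear (*s) (*s) (mono_map \<sigma> s)"
  unfolding Vector_Spaces.linear_iff mono_map_def
  by (auto simp: vec.vector_space_axioms vec_eq_iff algebra_simps)

lemma mono_sym:
  assumes "monomially_equivalent C D" shows "monomially_equivalent D C"
proof -
  obtain \<sigma> s where h: "bij \<sigma>" "\<forall>j. s j \<noteq> 0" "D = (\<lambda>x. \<chi> j. s j * x $ \<sigma> j) ` C"
    using assms unfolding monomially_equivalent_def by blast
  define \<tau> where "\<tau> = inv \<sigma>"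
  define t where "t j = 1 / s (\<tau> j)" for j
  have st: "\<sigma> (\<tau> j) = j" for j unfolding \<tau>_def using h(1) by (simp add: bij_is_surj surj_f_inv_f)
  have "C = (\<lambda>x. \<chi> j. t j * x $ \<tau> j) ` D"
  proof -
    have "(\<lambda>x. \<chi> j. t j * x $ \<tau> j) ((\<lambda>x. \<chi> j. s j * x $ \<sigma> j) x) = x" for x
      using h(2) by (simp add: vec_eq_iff t_def st)
    then show ?thesis unfolding h(3) image_image by simp
  qed
  moreover have "bij \<tau>" unfolding \<tau>_def using h(1) by (simp add: bij_imp_bij_inv)
  moreover have "\<forall>j. t j \<noteq> 0" using h(2) by (simp add: t_def)
  ultimately show ?thesis unfolding monomially_equivalent_def by blast
qed


lemma mono_transfer:
  fixes C :: "('a::field^'n::finite) set"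
  assumes "monomially_equivalent C D"
  shows "(Supp C = UNIV \<longrightarrow> Supp D = UNIV) \<and>
    (\<forall>S. vec.subspace S \<and> S \<subseteq> C \<and> Supp S = UNIV \<longrightarrow>
       (\<exists>S'. vec.subspace S' \<and> S' \<subseteq> D \<and> vec.dim S' = vec.dim S \<and> Supp S' = UNIV))"
proof -
  obtain \<sigma> s where h: "bij \<sigma>" "\<forall>j. s j \<noteq> 0" "D = mono_map \<sigma> s ` C"
    using assms unfolding monomially_equivalent_def mono_map_def[abs_def] by blast
  interpret T: Vector_Spaces.linear "(*s)" "(*s)" "mono_map \<sigma> s" by (rule mono_map_lin)
  have inj: "inj (mono_map \<sigma> s)"
  proof (rule injI)
    fix x y assume e: "mono_map \<sigma> s x = mono_map \<sigma> s y"
    show "x = y"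
    proof (subst vec_eq_iff, rule allI)
      fix i
      obtain j where "\<sigma> j = i" using h(1) by (metis bij_def surj_def)
      then show "x $ i = y $ i" using e h(2) by (auto simp: mono_map_def vec_eq_iff dest: spec[of _ j])
    qed
  qed
  have SuppT: "Supp S = UNIV \<Longrightarrow> Supp (mono_map \<sigma> s ` S) = UNIV" for S
  proof -
    assume a: "Supp S = UNIV"
    show ?thesis
    proof (rule set_eqI, simp)
      fix j
      obtain x where "x \<in> S" "x $ \<sigma> j \<noteq> 0" using a by (auto simp: Supp_def supp_def set_eq_iff)
      then show "j \<in> Supp (mono_map \<sigma> s ` S)" using h(2)
        by (auto simp: Supp_def supp_def mono_map_def)
    qed
  qed
  show ?thesis
  proof (intro conjI allI impI)
    show "Supp C = UNIV \<Longrightarrow> Supp D = UNIV" using SuppT h(3) by simp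
  next
    fix S assume S: "vec.subspace S \<and> S \<subseteq> C \<and> Supp S = UNIV"
    show "\<exists>S'. vec.subspace S' \<and> S' \<subseteq> D \<and> vec.dim S' = vec.dim S \<and> Supp S' = UNIV"
    proof (intro exI conjI)
      show "vec.subspace (mono_map \<sigma> s ` S)" using S T.subspace_image by blast
      show "mono_map \<sigma> s ` S \<subseteq> D" using S h(3) by auto
      show "vec.dim (mono_map \<sigma> s ` S) = vec.dim S"
        using vec.dim_image_eq[OF mono_map_lin] inj by (metis inj_on_subset subset_UNIV)
      show "Supp (mono_map \<sigma> s ` S) = UNIV" using SuppT S by blast
    qed
  qed
qed

lemma mono_cov:
  fixes C :: "('a::field^'n::finite) set"
  assumes "monomially_equivalent C D"
  shows "covering_dim C = covering_dim D"
proof -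
  have a: "monomially_equivalent D C" using mono_sym[OF assms] .
  note t1 = mono_transfer[OF assms] and t2 = mono_transfer[OF a]
  have SS: "Supp C = UNIV \<longleftrightarrow> Supp D = UNIV" using t1 t2 by blast
  have P: "(\<exists>D'. vec.subspace D' \<and> D' \<subseteq> C \<and> vec.dim D' = r \<and> Supp D' = UNIV) \<longleftrightarrow>
           (\<exists>D'. vec.subspace D' \<and> D' \<subseteq> D \<and> vec.dim D' = r \<and> Supp D' = UNIV)" for r
    using t1 t2 by metis
  show ?thesis unfolding covering_dim_def SS P by simp
qed


lemma count_points:
  fixes G :: "nat \<Rightarrow> 'a::{field,finite}^'n::finite"
  assumes nz: "\<forall>j. \<exists>i<k. G i $ j \<noteq> 0"
   and np: "\<forall>j j' c. j \<noteq> j' \<longrightarrow> \<not>(\<forall>i<k. G i $ j' = c * G i $ j)"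
   and pts: "\<forall>v::nat\<Rightarrow>'a. (\<exists>i<k. v i \<noteq> 0) \<longrightarrow> (\<exists>j c. c \<noteq> 0 \<and> (\<forall>i<k. G i $ j = c * v i))"
  shows "CARD('n) = (CARD('a)^k - 1) div (CARD('a) - 1)"
proof -
  define \<Phi> where "\<Phi> = (\<lambda>(j,c). restrict (\<lambda>i. c * G i $ j) {0..<k})"
  define A where "A = (UNIV :: 'n set) \<times> (UNIV - {0::'a})"
  define P where "P = PiE {0..<k} (\<lambda>_. UNIV :: 'a set)"
  define Z where "Z = restrict (\<lambda>_. 0::'a) {0..<k}"
  have bij: "bij_betw \<Phi> A (P - {Z})"
  proof (rule bij_betw_imageI)
    show "inj_on \<Phi> A"
    proof (rule inj_onI, clarify)
      fix j c j' c' assume "(j, c) \<in> A" "(j', c') \<in> A" and e: "\<Phi> (j, c) = \<Phi> (j', c')"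
      then have c: "c \<noteq> 0" "c' \<noteq> 0" by (auto simp: A_def)
      have e2: "c * G i $ j = c' * G i $ j'" if "i < k" for i
        using fun_cong[OF e, of i] that by (simp add: \<Phi>_def)
      have jj: "j = j'"
      proof (rule ccontr)
        assume "j \<noteq> j'"
        moreover have "\<forall>i<k. G i $ j' = (c / c') * G i $ j"
          using e2 c by (auto simp: field_simps)
        ultimately show False using np by blast
      qed
      obtain i where "i < k" "G i $ j \<noteq> 0" using nz by blast
      then show "j = j' \<and> c = c'" using e2[of i] jj by simp
    qed
  next
    show "\<Phi> ` A = P - {Z}"
    proof
      show "\<Phi> ` A \<subseteq> P - {Z}"
      proof clarify
        fix j c assume "(j, c) \<in> A"
        then have c: "c \<noteq> 0" by (auto simp: A_def)
        obtain i where "i < k" "G i $ j \<noteq> 0" using nz by blast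
        then have "\<Phi> (j, c) i \<noteq> Z i" using c by (simp add: \<Phi>_def Z_def)
        then show "\<Phi> (j, c) \<in> P - {Z}" by (auto simp: \<Phi>_def P_def)
      qed
    next
      show "P - {Z} \<subseteq> \<Phi> ` A"
      proof
        fix w assume w: "w \<in> P - {Z}"
        have "\<exists>i<k. w i \<noteq> 0"
        proof (rule ccontr)
          assume "\<not> ?thesis"
          then have "w = Z" using w by (auto simp: P_def Z_def PiE_def extensional_def fun_eq_iff)
          then show False using w by simp
        qed
        then obtain j c where jc: "c \<noteq> 0" "\<forall>i<k. G i $ j = c * w i" using pts by blast
        have "w = \<Phi> (j, 1/c)" using w jc
          by (auto simp: \<Phi>_def P_def PiE_def extensional_def fun_eq_iff)
        moreover have "(j, 1/c) \<in> A" using jc by (simp add: A_def)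
        ultimately show "w \<in> \<Phi> ` A" by blast
      qed
    qed
  qed
  have "card A = CARD('n) * (CARD('a) - 1)" by (simp add: A_def card_cartesian_product card_Diff_singleton)
  moreover have "card (P - {Z}) = CARD('a)^k - 1"
  proof -
    have "Z \<in> P" by (simp add: Z_def P_def)
    moreover have "card P = CARD('a)^k" by (simp add: P_def card_PiE)
    ultimately show ?thesis by (simp add: card_Diff_singleton)
  qed
  ultimately have eq: "CARD('n) * (CARD('a) - 1) = CARD('a)^k - 1" using bij_betw_same_card[OF bij] by simp
  have "CARD('a) \<ge> 2"
  proof -
    have "{0::'a, 1} \<subseteq> UNIV" by simp
    then have "card {0::'a,1} \<le> CARD('a)" by (intro card_mono) auto
    then show ?thesis by simp
  qed
  then show ?thesis using eq[symmetric] by simp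
qed


theorem mainTheorem4:
  fixes C :: "('a::{field,finite} ^ 'n::finite) set"
    and k :: nat
  assumes "vec.subspace C"
    and "vec.dim C = k"
    and "min_wt (dual_code C) = 3"
  shows "covering_dim C = enat k \<longleftrightarrow>
         (\<exists>D. dual_hamming_code k D \<and> monomially_equivalent C D)"
proof
  assume cov: "covering_dim C = enat k"
  obtain B where B: "B \<subseteq> C" "vec.independent B" "C \<subseteq> vec.span B" "card B = vec.dim C"
    by (rule vec.basis_exists)
  have fB: "finite B" using B(2) vec.finiteI_independent by blast
  from ex_bij_betw_nat_finite[OF fB] obtain G where G0: "bij_betw G {0..<card B} B" ..
  have G: "bij_betw G {0..<k} B" using G0 B(4) assms(2) by simp
  have GB: "G ` {0..<k} = B" and injG: "inj_on G {0..<k}" using G by (auto simp: bij_betw_def)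
  have CG: "C = vec.span (G ` {0..<k})"
  proof -
    have "vec.span B \<subseteq> C" using B(1) assms(1) by (rule vec.span_minimal)
    then show ?thesis using B(3) GB by auto
  qed
  have cols: "\<forall>j. \<exists>x\<in>C. x $ j \<noteq> 0" using zero_col[OF assms(3)] by blast
  have pts: "\<forall>v::nat\<Rightarrow>'a. (\<exists>i<k. v i \<noteq> 0) \<longrightarrow> (\<exists>j c. c \<noteq> 0 \<and> (\<forall>i<k. G i $ j = c * v i))"
  proof (intro allI impI)
    fix v :: "nat \<Rightarrow> 'a" assume v: "\<exists>i<k. v i \<noteq> 0"
    have ind: "vec.independent (G ` {0..<k})" using B(2) GB by simp
    show "\<exists>j c. c \<noteq> 0 \<and> (\<forall>i<k. G i $ j = c * v i)"
      using missing_point[OF CG ind injG cols v] cov by blast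
  qed
  have np: "\<forall>j j' c. j \<noteq> j' \<longrightarrow> \<not>(\<forall>i<k. G i $ j' = c * G i $ j)"
  proof (intro allI impI notI)
    fix j j' c assume jj: "j \<noteq> j'" and h: "\<forall>i<k. G i $ j' = c * G i $ j"
    have "\<forall>x\<in>C. x $ j' = c * x $ j"
    proof
      fix x assume "x \<in> C"
      then show "x $ j' = c * x $ j"
        using CG h by (intro vsp.linear_eq_on[OF lin_comp lin_scale[OF lin_comp], of x "G ` {0..<k}"]) auto
    qed
    then show False using prop_col[OF assms(3) jj] by blast
  qed
  have nz: "\<forall>j. \<exists>i<k. G i $ j \<noteq> 0"
  proof (rule ccontr)
    assume "\<not> ?thesis"
    then obtain j where h: "\<forall>i<k. G i $ j = 0 * G i $ j" by auto
    have "\<forall>x\<in>C. x $ j = 0 * x $ j"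
    proof
      fix x assume "x \<in> C"
      then show "x $ j = 0 * x $ j"
        using CG h by (intro vsp.linear_eq_on[OF lin_comp lin_scale[OF lin_comp], of x "G ` {0..<k}"]) auto
    qed
    then show False using cols by auto
  qed
  have uniq: "\<forall>v :: nat \<Rightarrow> 'a. (\<exists>i<k. v i \<noteq> 0) \<longrightarrow>
            (\<exists>!j. \<exists>c. c \<noteq> 0 \<and> (\<forall>i<k. G i $ j = c * v i))"
  proof (intro allI impI)
    fix v :: "nat \<Rightarrow> 'a" assume v: "\<exists>i<k. v i \<noteq> 0"
    show "\<exists>!j. \<exists>c. c \<noteq> 0 \<and> (\<forall>i<k. G i $ j = c * v i)"
    proof (rule ex_ex1I)
      show "\<exists>j c. c \<noteq> 0 \<and> (\<forall>i<k. G i $ j = c * v i)" using pts v by blast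
    next
      fix j1 j2 assume "\<exists>c. c \<noteq> 0 \<and> (\<forall>i<k. G i $ j1 = c * v i)" "\<exists>c. c \<noteq> 0 \<and> (\<forall>i<k. G i $ j2 = c * v i)"
      then obtain c1 c2 where c: "c1 \<noteq> 0" "\<forall>i<k. G i $ j1 = c1 * v i" "\<forall>i<k. G i $ j2 = c2 * v i" by blast
      have "\<forall>i<k. G i $ j2 = (c2 / c1) * G i $ j1" using c by (auto simp: field_simps)
      then show "j1 = j2" using np by blast
    qed
  qed
  have "dual_hamming_code k C"
    unfolding dual_hamming_code_def
    apply (intro conjI exI[of _ G])
    using count_points[OF nz np pts] assms(2) CG nz uniq by simp_all
  moreover have "monomially_equivalent C C"
    unfolding monomially_equivalent_def
  proof (intro exI conjI)
    have "(\<lambda>x::'a^'n. \<chi> j. 1 * x $ id j) = (\<lambda>x. x)" by (simp add: vec_eq_iff fun_eq_iff)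
    then show "C = (\<lambda>x. \<chi> j. 1 * x $ id j) ` C" by simp
  qed (simp_all add: bij_def inj_on_def)
  ultimately show "\<exists>D. dual_hamming_code k D \<and> monomially_equivalent C D" by blast
next
  assume "\<exists>D. dual_hamming_code k D \<and> monomially_equivalent C D"
  then obtain D where D: "dual_hamming_code k D" "monomially_equivalent C D" by blast
  obtain G where G: "vec.dim D = k" "D = vec.span (G ` {0..<k})" "\<forall>j. \<exists>i<k. G i $ j \<noteq> 0"
     "\<forall>v :: nat \<Rightarrow> 'a. (\<exists>i<k. v i \<noteq> 0) \<longrightarrow> (\<exists>!j. \<exists>c. c \<noteq> 0 \<and> (\<forall>i<k. G i $ j = c * v i))"
    using D(1) unfolding dual_hamming_code_def by blast
  have pts: "\<forall>v::nat\<Rightarrow>'a. (\<exists>i<k. v i \<noteq> 0) \<longrightarrow> (\<exists>j c. c \<noteq> 0 \<and> (\<forall>i<k. G i $ j = c * v i))"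
    using G(4) by blast
  have "Supp D = UNIV"
  proof (rule set_eqI, simp)
    fix j obtain i where "i < k" "G i $ j \<noteq> 0" using G(3) by blast
    moreover have "G i \<in> D" using G(2) \<open>i < k\<close> by (auto intro: vec.span_base)
    ultimately show "j \<in> Supp D" by (auto simp: Supp_def supp_def)
  qed
  then have "covering_dim D = enat k" using cov_dim_all_points[OF G(2,1) _ pts] by simp
  then show "covering_dim C = enat k" using mono_cov[OF D(2)] by simp
qed

end
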